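(* Let $E$ be a finite-dimensional real inner product space and let $C(t)=\bigcap_{i=1}^k\{x\in E:(x,n_i)_0\le c_i(t)\}$, $t\ge0$, be nonempty and uniformly bounded, where $n_1,\dots,n_k\in E$, $k\ge\dim E$, and $c_i$ are globally Lipschitz continuous $T$-periodic functions. Assume that any $\dim E$ vectors of $\{n_i\}_{i=1}^k$ are linearly independent and that the cardinality of $J(t,x)=\{i\in\{1,\dots,k\}:(x,n_i)_0=c_i(t)\}$ does not exceed $\dim E$ for all $x\in C(t)$ and $t\in[0,T]$. Then the set $X(t)$ of $T$-periodic solutions of $-\dot x\in N^0_{C(t)}(x)$ contains at most one non-constant $T$-periodic solution.
   Context: $(\cdot,\cdot)_0$ is the inner product of $E$. $N^0_K(x)=\{\zeta\in E:(\zeta,c-x)_0\le0\ \forall c\in K\}$ if $x\in K$, $\emptyset$ otherwise. A solution is a Lipschitz function $x$ on $[0,\infty)$ with $x(t)\in C(t)$ satisfying the inclusion a.e. (existing and unique for each initial value). $T$-periodic solutions are those with $x(T)=x(0)$. *)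

theory Defs
  imports "HOL-Analysis.Analysis"
begin

definition normal_cone :: "'a::real_inner set \<Rightarrow> 'a \<Rightarrow> 'a set" where
  "normal_cone K x = (if x \<in> K then {\<zeta>. \<forall>c\<in>K. \<zeta> \<bullet> (c - x) \<le> 0} else {})"

definition poly_set :: "nat \<Rightarrow> (nat \<Rightarrow> 'a::real_inner) \<Rightarrow> (nat \<Rightarrow> real \<Rightarrow> real) \<Rightarrow> real \<Rightarrow> 'a set" where
  "poly_set k n c t = {x. \<forall>i\<in>{1..k}. x \<bullet> n i \<le> c i t}"

definition active_set :: "nat \<Rightarrow> (nat \<Rightarrow> 'a::real_inner) \<Rightarrow> (nat \<Rightarrow> real \<Rightarrow> real) \<Rightarrow> real \<Rightarrow> 'a \<Rightarrow> nat set" where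
  "active_set k n c t x = {i\<in>{1..k}. x \<bullet> n i = c i t}"

definition sweeping_solution :: "(real \<Rightarrow> 'a::euclidean_space set) \<Rightarrow> (real \<Rightarrow> 'a) \<Rightarrow> bool" where
  "sweeping_solution C x \<longleftrightarrow>
     (\<exists>L. L-lipschitz_on {0..} x) \<and>
     (\<forall>t\<ge>0. x t \<in> C t) \<and>
     (AE t in lebesgue. t \<ge> 0 \<longrightarrow>
        (\<exists>v. (x has_vector_derivative v) (at t) \<and> - v \<in> normal_cone (C t) (x t)))"

definition periodic_solution :: "real \<Rightarrow> (real \<Rightarrow> 'a::euclidean_space set) \<Rightarrow> (real \<Rightarrow> 'a) \<Rightarrow> bool" where
  "periodic_solution T C x \<longleftrightarrow> sweeping_solution C x \<and> x T = x 0"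

end

theory Submission
  imports Defs
begin

lemma hvd_inner:
  fixes f g :: "real \<Rightarrow> 'a::real_inner"
  assumes "(f has_vector_derivative f') (at t)" "(g has_vector_derivative g') (at t)"
  shows "((\<lambda>s. f s \<bullet> g s) has_real_derivative (f t \<bullet> g' + f' \<bullet> g t)) (at t)"
proof -
  have "((\<lambda>s. f s \<bullet> g s) has_derivative (\<lambda>h. f t \<bullet> (h *\<^sub>R g') + (h *\<^sub>R f') \<bullet> g t)) (at t)"
    using has_derivative_inner[OF assms[unfolded has_vector_derivative_def]] by simp
  then show ?thesis
    unfolding has_real_derivative_iff_has_vector_derivative has_vector_derivative_def
    by (simp add: algebra_simps inner_scaleR_left inner_scaleR_right)
qed

lemma countable_negligible:
  fixes A :: "real set"
  assumes "countable A" shows "negligible A"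
proof -
  have "A = \<Union>((\<lambda>a. {a}) ` A)" by auto
  moreover have "negligible (\<Union>((\<lambda>a. {a}) ` A))"
    using assms by (intro negligible_countable_Union) auto
  ultimately show ?thesis by simp
qed

lemma countable_isolated:
  fixes A :: "real set"
  shows "countable {t\<in>A. \<not> t islimpt A}"
proof -
  let ?B = "{t\<in>A. \<not> t islimpt A}"
  have "\<forall>t\<in>?B. \<exists>r>0. \<forall>s\<in>A. s \<noteq> t \<longrightarrow> dist s t \<ge> r"
  proof
    fix t assume "t \<in> ?B"
    then have "\<not> t islimpt A" by auto
    then obtain r where "r>0" "\<forall>s\<in>A. s \<noteq> t \<longrightarrow> \<not> dist s t < r"
      unfolding islimpt_approachable by auto
    then show "\<exists>r>0. \<forall>s\<in>A. s \<noteq> t \<longrightarrow> dist s t \<ge> r" by (auto simp: not_less)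
  qed
  then obtain r where r: "\<And>t. t\<in>?B \<Longrightarrow> r t > 0 \<and> (\<forall>s\<in>A. s \<noteq> t \<longrightarrow> dist s t \<ge> r t)"
    by metis
  have "\<forall>t\<in>?B. \<exists>q\<in>\<rat>. t < q \<and> q < t + r t"
    using r by (intro ballI Rats_dense_in_real) (auto)
  then obtain q where q: "\<And>t. t\<in>?B \<Longrightarrow> q t \<in> \<rat> \<and> t < q t \<and> q t < t + r t"
    by metis
  have "inj_on q ?B"
  proof (rule inj_onI)
    fix s t assume s: "s \<in> ?B" and t: "t \<in> ?B" and e: "q s = q t"
    show "s = t"
    proof (rule ccontr)
      assume ne: "s \<noteq> t"
      show False
      proof (cases "s < t")
        case True
        have "dist t s < r s" using q[OF s] q[OF t] e True by (auto simp: dist_real_def)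
        then show False using r[OF s] t ne by auto
      next
        case False
        then have "t < s" using ne by auto
        have "dist s t < r t" using q[OF s] q[OF t] e \<open>t < s\<close> by (auto simp: dist_real_def)
        then show False using r[OF t] s ne by auto
      qed
    qed
  qed
  moreover have "countable (q ` ?B)"
    using q countable_rat by (meson countable_subset image_subsetI)
  ultimately show ?thesis using countable_image_inj_on by blast
qed

lemma mono_ae:
  fixes f :: "real \<Rightarrow> real"
  assumes ab: "a \<le> b"
    and lip: "\<And>s t. s \<in> {a..b} \<Longrightarrow> t \<in> {a..b} \<Longrightarrow> \<bar>f s - f t\<bar> \<le> B * \<bar>s - t\<bar>"
    and N: "negligible N"
    and der: "\<And>t. t \<in> {a<..<b} \<Longrightarrow> t \<notin> N \<Longrightarrow> \<exists>D. (f has_real_derivative D) (at t) \<and> D \<le> 0"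
  shows "f b \<le> f a"
proof (rule ccontr)
  assume "\<not> f b \<le> f a"
  then have fab: "f a < f b" by simp
  then have "a < b" using ab by (cases "a = b") auto
  define \<epsilon> where "\<epsilon> = (f b - f a) / (2 * (b - a))"
  have \<epsilon>: "\<epsilon> > 0" using fab \<open>a < b\<close> by (simp add: \<epsilon>_def)
  define g where "g t = f t - \<epsilon> * t" for t
  have e2: "\<epsilon> * (b - a) = (f b - f a) / 2"
    using \<open>a < b\<close> unfolding \<epsilon>_def by (simp add: field_simps)
  have "g b - g a = (f b - f a) - \<epsilon> * (b - a)"
    by (simp add: g_def algebra_simps)
  then have "g b - g a = (f b - f a) - (f b - f a) / 2" by (simp only: e2)
  then have "g b - g a = (f b - f a) / 2" by (simp add: field_simps)
  then have gab: "g a < g b" using fab by simp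
  have "0 \<le> B * (b - a)" 
  proof -
    have "\<bar>f b - f a\<bar> \<le> B * \<bar>b - a\<bar>" using lip[of b a] ab by auto
    then show ?thesis using \<open>a < b\<close> by (smt (verit) abs_ge_zero)
  qed
  then have B0: "B \<ge> 0" using \<open>a < b\<close> by (simp add: zero_le_mult_iff)
  have glip: "\<bar>g s - g t\<bar> \<le> (B + \<epsilon>) * \<bar>s - t\<bar>" if "s \<in> {a..b}" "t \<in> {a..b}" for s t
  proof -
    have "\<bar>g s - g t\<bar> = \<bar>(f s - f t) - \<epsilon> * (s - t)\<bar>" by (simp add: g_def algebra_simps)
    also have "\<dots> \<le> \<bar>f s - f t\<bar> + \<epsilon> * \<bar>s - t\<bar>" using \<epsilon> abs_triangle_ineq4[of "f s - f t" "\<epsilon> * (s - t)"] by (simp add: abs_mult)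
    also have "\<dots> \<le> (B + \<epsilon>) * \<bar>s - t\<bar>" using lip[OF that] by (simp add: algebra_simps)
    finally show ?thesis .
  qed
  have gcont: "continuous_on {a..b} g"
  proof (rule continuous_onI)
    fix x e :: real assume "x \<in> {a..b}" "e > 0"
    then show "\<exists>d>0. \<forall>x'\<in>{a..b}. dist x' x < d \<longrightarrow> dist (g x') (g x) \<le> e"
      using glip \<epsilon> B0
      by (intro exI[of _ "e / (B + \<epsilon> + 1)"])
         (auto simp: dist_real_def field_simps intro!: order_trans[OF glip] mult_mono)
  qed
  have negim: "negligible (g ` (N \<inter> {a..b}))"
  proof (rule negligible_locally_Lipschitz_image)
    show "negligible (N \<inter> {a..b})" using N negligible_Int by blast
    fix x assume x: "x \<in> N \<inter> {a..b}"
    show "\<exists>T B'. open T \<and> x \<in> T \<and> (\<forall>y\<in>N \<inter> {a..b} \<inter> T. norm (g y - g x) \<le> B' * norm (y - x))"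
      using glip x by (intro exI[of _ UNIV] exI[of _ "B + \<epsilon>"]) auto
  qed auto
  have "\<not> {g a<..<g b} \<subseteq> g ` (N \<inter> {a..b})"
  proof
    assume "{g a<..<g b} \<subseteq> g ` (N \<inter> {a..b})"
    then have "negligible {g a<..<g b}" using negim negligible_subset by blast
    moreover have "\<not> negligible {g a<..<g b}"
      using open_not_negligible[of "{g a<..<g b}"] gab by auto
    ultimately show False by blast
  qed
  then obtain v where v: "g a < v" "v < g b" "v \<notin> g ` (N \<inter> {a..b})" by (meson greaterThanLessThan_iff subsetI)
  define K where "K = {a..b} \<inter> g -` {..v}"
  have Kcl: "closed K" unfolding K_def by (rule continuous_closed_preimage[OF gcont]) auto
  have aK: "a \<in> K" using v ab by (auto simp: K_def)
  have Kbdd: "bdd_above K" unfolding K_def by (rule bdd_aboveI[of _ b]) auto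
  define s where "s = Sup K"
  have sK: "s \<in> K" unfolding s_def using closed_contains_Sup[OF _ Kbdd Kcl] aK by auto
  have sup: "t \<le> s" if "t \<in> K" for t unfolding s_def using that Kbdd by (rule cSup_upper)
  have s_ab: "a \<le> s" "s \<le> b" "g s \<le> v" using sK by (auto simp: K_def)
  have "s \<noteq> b" using s_ab v by auto
  then have sb: "s < b" using s_ab by auto
  have gs: "g s = v"
  proof (rule ccontr)
    assume "g s \<noteq> v"
    then have lt: "g s < v" using s_ab by auto
    obtain d where d: "d > 0" "\<forall>x'\<in>{a..b}. dist x' s < d \<longrightarrow> dist (g x') (g s) < v - g s"
      using gcont[unfolded continuous_on_iff] s_ab lt by (meson atLeastAtMost_iff diff_gt_0_iff_gt)
    define t where "t = min b (s + d/2)"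
    have t: "t \<in> {a..b}" "dist t s < d" "s < t" using d sb s_ab by (auto simp: t_def dist_real_def)
    then have "\<bar>g t - g s\<bar> < v - g s" using d(2) by (auto simp: dist_real_def)
    then have "g t < v" by linarith
    then have "t \<in> K" using t by (auto simp: K_def)
    then show False using sup t by fastforce
  qed
  have "s \<noteq> a" using gs v by auto
  then have s_in: "s \<in> {a<..<b}" using s_ab sb by auto
  have "s \<notin> N" using gs v s_ab by auto
  then obtain D where D: "(f has_real_derivative D) (at s)" "D \<le> 0" using der s_in by blast
  have "(g has_real_derivative (D - \<epsilon>)) (at s)"
    unfolding g_def by (auto intro!: derivative_eq_intros D)
  then obtain d where d: "d > 0" "\<forall>h>0. h < d \<longrightarrow> g (s + h) < g s"
    using DERIV_neg_dec_right[of g "D - \<epsilon>" s] D \<epsilon> by auto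
  define h where "h = min (b - s) (d/2)"
  have h: "h > 0" "h < d" "s + h \<le> b" using d sb by (auto simp: h_def)
  then have "g (s + h) < v" using d gs by auto
  then have "s + h \<in> K" using h s_ab by (auto simp: K_def)
  then show False using sup h by fastforce
qed


lemma const_ae:
  fixes f :: "real \<Rightarrow> real"
  assumes ab: "a \<le> b"
    and lip: "\<And>s t. s \<in> {a..b} \<Longrightarrow> t \<in> {a..b} \<Longrightarrow> \<bar>f s - f t\<bar> \<le> B * \<bar>s - t\<bar>"
    and N: "negligible N"
    and der: "\<And>t. t \<in> {a<..<b} \<Longrightarrow> t \<notin> N \<Longrightarrow> (f has_real_derivative 0) (at t)"
  shows "f b = f a"
proof -
  have "f b \<le> f a" using mono_ae[OF ab lip N] der by blast
  moreover have "- f b \<le> - f a"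
  proof (rule mono_ae[OF ab _ N])
    show "\<bar>- f s - - f t\<bar> \<le> B * \<bar>s - t\<bar>" if "s \<in> {a..b}" "t \<in> {a..b}" for s t
      using lip[OF that] by simp
    show "\<exists>D. ((\<lambda>x. - f x) has_real_derivative D) (at t) \<and> D \<le> 0"
      if "t \<in> {a<..<b}" "t \<notin> N" for t
      using DERIV_minus[OF der[OF that]] by auto
  qed
  ultimately show ?thesis by simp
qed

lemma vconst_ae:
  fixes z :: "real \<Rightarrow> 'a::real_inner"
  assumes ab: "a \<le> b"
    and lip: "\<And>s t. s \<in> {a..b} \<Longrightarrow> t \<in> {a..b} \<Longrightarrow> norm (z s - z t) \<le> B * \<bar>s - t\<bar>"
    and N: "negligible N"
    and der: "\<And>t. t \<in> {a<..<b} \<Longrightarrow> t \<notin> N \<Longrightarrow> (z has_vector_derivative 0) (at t)"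
  shows "z b = z a"
proof -
  define u where "u = z b - z a"
  define f where "f t = z t \<bullet> u" for t
  have "f b = f a"
  proof (rule const_ae[OF ab _ N])
    show "\<bar>f s - f t\<bar> \<le> (B * norm u) * \<bar>s - t\<bar>" if "s \<in> {a..b}" "t \<in> {a..b}" for s t
    proof -
      have "\<bar>f s - f t\<bar> = \<bar>(z s - z t) \<bullet> u\<bar>" by (simp add: f_def inner_diff_left)
      also have "\<dots> \<le> norm (z s - z t) * norm u" by (rule Cauchy_Schwarz_ineq2)
      also have "\<dots> \<le> (B * \<bar>s - t\<bar>) * norm u" by (rule mult_right_mono[OF lip[OF that]]) simp
      finally show ?thesis by (simp add: algebra_simps)
    qed
    show "(f has_real_derivative 0) (at t)" if "t \<in> {a<..<b}" "t \<notin> N" for t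
      using hvd_inner[OF der[OF that], of "\<lambda>_. u" 0] unfolding f_def [abs_def] by simp
  qed
  then have "u \<bullet> u = 0" by (simp add: f_def u_def inner_diff_left)
  then show ?thesis by (simp add: u_def)
qed

lemma sol_ae:
  assumes "sweeping_solution C z"
  shows "\<exists>N. negligible N \<and> (\<forall>t\<ge>0. t \<notin> N \<longrightarrow>
           (\<exists>v. (z has_vector_derivative v) (at t) \<and> - v \<in> normal_cone (C t) (z t)))"
proof -
  have "AE t in lebesgue. t \<ge> 0 \<longrightarrow>
        (\<exists>v. (z has_vector_derivative v) (at t) \<and> - v \<in> normal_cone (C t) (z t))"
    using assms unfolding sweeping_solution_def by blast
  then obtain N where "negligible N" "{t. \<not> (t \<ge> 0 \<longrightarrow>
        (\<exists>v. (z has_vector_derivative v) (at t) \<and> - v \<in> normal_cone (C t) (z t)))} \<subseteq> N"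
    unfolding eventually_ae_filter_negligible by blast
  then show ?thesis by blast
qed

lemma sol_lip:
  assumes "sweeping_solution C z"
  shows "\<exists>L\<ge>0. \<forall>s\<ge>0. \<forall>t\<ge>0. norm (z s - z t) \<le> L * \<bar>s - t\<bar>"
proof -
  obtain L where "L-lipschitz_on {0..} z" using assms unfolding sweeping_solution_def by blast
  then show ?thesis unfolding lipschitz_on_def by (auto simp: dist_norm)
qed

lemma sol_in:
  assumes "sweeping_solution C z" "t \<ge> 0" shows "z t \<in> C t"
  using assms unfolding sweeping_solution_def by blast

lemma contract:
  assumes z1: "sweeping_solution C z1" and z2: "sweeping_solution C z2"
    and ab: "0 \<le> a" "a \<le> b"
  shows "norm (z1 b - z2 b) \<le> norm (z1 a - z2 a)"
proof -
  obtain N1 where N1: "negligible N1" "\<forall>t\<ge>0. t \<notin> N1 \<longrightarrow>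
           (\<exists>v. (z1 has_vector_derivative v) (at t) \<and> - v \<in> normal_cone (C t) (z1 t))"
    using sol_ae[OF z1] by blast
  obtain N2 where N2: "negligible N2" "\<forall>t\<ge>0. t \<notin> N2 \<longrightarrow>
           (\<exists>v. (z2 has_vector_derivative v) (at t) \<and> - v \<in> normal_cone (C t) (z2 t))"
    using sol_ae[OF z2] by blast
  obtain L1 where L1: "L1 \<ge> 0" "\<forall>s\<ge>0. \<forall>t\<ge>0. norm (z1 s - z1 t) \<le> L1 * \<bar>s - t\<bar>"
    using sol_lip[OF z1] by blast
  obtain L2 where L2: "L2 \<ge> 0" "\<forall>s\<ge>0. \<forall>t\<ge>0. norm (z2 s - z2 t) \<le> L2 * \<bar>s - t\<bar>"
    using sol_lip[OF z2] by blast
  define d where "d t = z1 t - z2 t" for t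
  define L where "L = L1 + L2"
  have dL: "norm (d s - d t) \<le> L * \<bar>s - t\<bar>" if "s \<ge> 0" "t \<ge> 0" for s t
  proof -
    have "norm (d s - d t) = norm ((z1 s - z1 t) - (z2 s - z2 t))" by (simp add: d_def algebra_simps)
    also have "\<dots> \<le> norm (z1 s - z1 t) + norm (z2 s - z2 t)" by (rule norm_triangle_ineq4)
    also have "\<dots> \<le> L * \<bar>s - t\<bar>" using L1 L2 that by (simp add: L_def algebra_simps add_mono)
    finally show ?thesis .
  qed
  define M where "M = norm (d a) + L * (b - a)"
  have dM: "norm (d s) \<le> M" if "s \<in> {a..b}" for s
  proof -
    have "norm (d s) \<le> norm (d a) + norm (d s - d a)" by (metis norm_triangle_sub add.commute)
    also have "norm (d s - d a) \<le> L * (b - a)"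
    proof -
      have "norm (d s - d a) \<le> L * (s - a)" using dL[of s a] that ab by auto
      also have "\<dots> \<le> L * (b - a)" using that L1 L2 by (auto simp: L_def intro: mult_left_mono)
      finally show ?thesis .
    qed
    finally show ?thesis by (simp add: M_def)
  qed
  define f where "f t = d t \<bullet> d t" for t
  have "f b \<le> f a"
  proof (rule mono_ae[OF ab(2) _ negligible_Un[OF N1(1) N2(1)]])
    show "\<bar>f s - f t\<bar> \<le> (L * (2 * M)) * \<bar>s - t\<bar>" if s: "s \<in> {a..b}" and t: "t \<in> {a..b}" for s t
    proof -
      have "\<bar>f s - f t\<bar> = \<bar>(d s - d t) \<bullet> (d s + d t)\<bar>" by (simp add: f_def algebra_simps inner_commute)
      also have "\<dots> \<le> norm (d s - d t) * norm (d s + d t)" by (rule Cauchy_Schwarz_ineq2)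
      also have "\<dots> \<le> (L * \<bar>s - t\<bar>) * (2 * M)"
      proof (rule mult_mono)
        show "norm (d s - d t) \<le> L * \<bar>s - t\<bar>" using dL s t ab by auto
        show "norm (d s + d t) \<le> 2 * M"
          using dM[OF s] dM[OF t] norm_triangle_ineq[of "d s" "d t"] by simp
        show "0 \<le> L * \<bar>s - t\<bar>" using L1 L2 by (simp add: L_def)
      qed simp
      finally show ?thesis by (simp add: algebra_simps)
    qed
    show "\<exists>D. (f has_real_derivative D) (at t) \<and> D \<le> 0"
      if t: "t \<in> {a<..<b}" "t \<notin> N1 \<union> N2" for t
    proof -
      have t0: "t \<ge> 0" using t ab by auto
      obtain v1 where v1: "(z1 has_vector_derivative v1) (at t)" "- v1 \<in> normal_cone (C t) (z1 t)"
        using N1(2) t t0 by blast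
      obtain v2 where v2: "(z2 has_vector_derivative v2) (at t)" "- v2 \<in> normal_cone (C t) (z2 t)"
        using N2(2) t t0 by blast
      have dd: "(d has_vector_derivative (v1 - v2)) (at t)"
        unfolding d_def by (intro derivative_intros v1 v2)
      have "(f has_real_derivative (d t \<bullet> (v1 - v2) + (v1 - v2) \<bullet> d t)) (at t)"
        unfolding f_def by (rule hvd_inner[OF dd dd])
      moreover have "d t \<bullet> (v1 - v2) + (v1 - v2) \<bullet> d t \<le> 0"
      proof -
        have in1: "z1 t \<in> C t" and in2: "z2 t \<in> C t" using z1 z2 t0 by (auto intro: sol_in)
        have "- v1 \<bullet> (z2 t - z1 t) \<le> 0" using v1(2) in2 by (auto simp: normal_cone_def split: if_splits)
        moreover have "- v2 \<bullet> (z1 t - z2 t) \<le> 0" using v2(2) in1 by (auto simp: normal_cone_def split: if_splits)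
        ultimately show ?thesis by (simp add: d_def inner_commute algebra_simps inner_diff_left inner_diff_right)
      qed
      ultimately show ?thesis by blast
    qed
  qed
  then have "norm (d b) ^ 2 \<le> norm (d a) ^ 2" by (simp add: f_def power2_norm_eq_inner)
  then show ?thesis by (simp add: d_def power2_le_iff_abs_le)
qed


lemma shift_sol:
  assumes z: "sweeping_solution C z" and T: "T \<ge> 0" and CT: "\<And>t. t \<ge> 0 \<Longrightarrow> C (t + T) = C t"
  shows "sweeping_solution C (\<lambda>t. z (t + T))"
proof -
  obtain L where L: "L-lipschitz_on {0..} z" using z unfolding sweeping_solution_def by blast
  have "L-lipschitz_on {0..} (\<lambda>t. z (t + T))"
    unfolding lipschitz_on_def
  proof (intro conjI ballI)
    show "0 \<le> L" using L unfolding lipschitz_on_def by simp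
    fix x y :: real assume "x \<in> {0..}" "y \<in> {0..}"
    then have "x + T \<in> {0..}" "y + T \<in> {0..}" using T by auto
    then have "dist (z (x + T)) (z (y + T)) \<le> L * dist (x + T) (y + T)"
      using L unfolding lipschitz_on_def by blast
    then show "dist (z (x + T)) (z (y + T)) \<le> L * dist x y" by (simp add: dist_real_def)
  qed
  moreover have "\<forall>t\<ge>0. z (t + T) \<in> C t"
    using sol_in[OF z] CT T by (metis add_nonneg_nonneg)
  moreover have "AE t in lebesgue. t \<ge> 0 \<longrightarrow>
        (\<exists>v. ((\<lambda>t. z (t + T)) has_vector_derivative v) (at t) \<and> - v \<in> normal_cone (C t) (z (t + T)))"
  proof -
    obtain N where N: "negligible N" "\<forall>t\<ge>0. t \<notin> N \<longrightarrow>
           (\<exists>v. (z has_vector_derivative v) (at t) \<and> - v \<in> normal_cone (C t) (z t))"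
      using sol_ae[OF z] by blast
    have "negligible ((+) (-T) ` N)" using N(1) by (rule negligible_translation)
    moreover have "{t. \<not> (t \<ge> 0 \<longrightarrow>
        (\<exists>v. ((\<lambda>t. z (t + T)) has_vector_derivative v) (at t) \<and> - v \<in> normal_cone (C t) (z (t + T))))}
        \<subseteq> (+) (-T) ` N"
    proof
      fix t assume t: "t \<in> {t. \<not> (t \<ge> 0 \<longrightarrow>
        (\<exists>v. ((\<lambda>t. z (t + T)) has_vector_derivative v) (at t) \<and> - v \<in> normal_cone (C t) (z (t + T))))}"
      show "t \<in> (+) (-T) ` N"
      proof (rule ccontr)
        assume nt: "t \<notin> (+) (-T) ` N"
        have tT: "t + T \<notin> N"
        proof
          assume "t + T \<in> N"
          then have "-T + (t + T) \<in> (+) (-T) ` N" by blast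
          then show False using nt by simp
        qed
        have t0: "t \<ge> 0" using t by auto
        then obtain v where v: "(z has_vector_derivative v) (at (t + T))" "- v \<in> normal_cone (C (t + T)) (z (t + T))"
          using N(2) tT T by (meson add_nonneg_nonneg)
        have "((\<lambda>t. t + T) has_vector_derivative 1) (at t)"
          using has_vector_derivative_add[OF has_vector_derivative_id has_vector_derivative_const[of T]] by simp
        from vector_diff_chain_at[OF this, of z v] v(1)
        have "((\<lambda>t. z (t + T)) has_vector_derivative v) (at t)" by (simp add: o_def)
        then show False using t v(2) CT[OF t0] by auto
      qed
    qed
    ultimately show ?thesis unfolding eventually_ae_filter_negligible by blast
  qed
  ultimately show ?thesis unfolding sweeping_solution_def by blast
qed

lemma periodic_shift:
  assumes z: "periodic_solution T C z" and T: "T \<ge> 0" and CT: "\<And>t. t \<ge> 0 \<Longrightarrow> C (t + T) = C t"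
    and t: "t \<ge> 0"
  shows "z (t + T) = z t"
proof -
  have s: "sweeping_solution C z" "z T = z 0" using z unfolding periodic_solution_def by auto
  have "norm (z (t + T) - z t) \<le> norm (z (0 + T) - z 0)"
    using contract[OF shift_sol[OF s(1) T CT] s(1), of 0 t] t by simp
  then show ?thesis using s(2) by simp
qed

lemma periodic_shift_n:
  assumes z: "periodic_solution T C z" and T: "T \<ge> 0" and CT: "\<And>t. t \<ge> 0 \<Longrightarrow> C (t + T) = C t"
    and t: "t \<ge> 0"
  shows "z (t + real m * T) = z t"
proof (induction m)
  case 0 then show ?case by simp
next
  case (Suc m)
  have "z (t + real (Suc m) * T) = z ((t + real m * T) + T)" by (simp add: algebra_simps)
  also have "\<dots> = z (t + real m * T)" using periodic_shift[OF z T CT] t T by simp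
  finally show ?case using Suc by simp
qed

lemma antimono_periodic_const:
  fixes h :: "real \<Rightarrow> real"
  assumes anti: "\<And>s t. 0 \<le> s \<Longrightarrow> s \<le> t \<Longrightarrow> h t \<le> h s"
    and per: "\<And>t m. t \<ge> 0 \<Longrightarrow> h (t + real m * T) = h t" and T: "T > 0"
    and s: "s \<ge> 0" and t: "t \<ge> 0"
  shows "h s = h t"
proof -
  have le: "h s \<le> h t" if "0 \<le> s" "0 \<le> t" for s t
  proof -
    obtain m :: nat where m: "t / T \<le> real m" using real_arch_simple by blast
    then have "t \<le> real m * T" using T by (simp add: field_simps)
    then have "h (s + real m * T) \<le> h t" using anti that T by (auto intro: anti)
    then show ?thesis using per[OF that(1)] by simp
  qed
  show ?thesis using le[OF s t] le[OF t s] by simp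
qed


lemma poly_polar:
  fixes n :: "nat \<Rightarrow> 'a::euclidean_space"
  assumes z: "z \<in> poly_set k n c t" and zeta: "\<zeta> \<in> normal_cone (poly_set k n c t) z"
    and v: "\<And>i. i \<in> {1..k} \<Longrightarrow> z \<bullet> n i = c i t \<Longrightarrow> v \<bullet> n i \<le> 0"
  shows "\<zeta> \<bullet> v \<le> 0"
proof -
  have ev: "\<forall>\<^sub>F e in at_right (0::real). (z + e *\<^sub>R v) \<bullet> n i \<le> c i t" if i: "i \<in> {1..k}" for i
  proof (cases "z \<bullet> n i = c i t")
    case True
    have "\<forall>\<^sub>F e in at_right (0::real). e > 0" by (simp add: eventually_at_right_less)
    then show ?thesis
    proof (rule eventually_mono)
      fix e :: real assume "e > 0"
      then have "e * (v \<bullet> n i) \<le> 0" using v[OF i True] by (simp add: mult_nonneg_nonpos)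
      then show "(z + e *\<^sub>R v) \<bullet> n i \<le> c i t" using True by (simp add: inner_add_left)
    qed
  next
    case False
    then have lt: "z \<bullet> n i < c i t" using z i by (auto simp: poly_set_def less_le)
    have "((\<lambda>e. z \<bullet> n i + e * (v \<bullet> n i)) \<longlongrightarrow> z \<bullet> n i + 0 * (v \<bullet> n i)) (at_right (0::real))"
      by (intro tendsto_intros)
    then have "\<forall>\<^sub>F e in at_right (0::real). z \<bullet> n i + e * (v \<bullet> n i) < c i t"
      using lt by (intro order_tendstoD(2)) auto
    then show ?thesis by (rule eventually_mono) (simp add: inner_add_left)
  qed
  have "\<forall>\<^sub>F e in at_right (0::real). (\<forall>i\<in>{1..k}. (z + e *\<^sub>R v) \<bullet> n i \<le> c i t) \<and> e > 0"
    using ev by (intro eventually_conj eventually_ball_finite) (auto simp: eventually_at_right_less)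
  then obtain e where e: "\<forall>i\<in>{1..k}. (z + e *\<^sub>R v) \<bullet> n i \<le> c i t" "e > (0::real)"
    using eventually_happens[of _ "at_right (0::real)"] by (auto simp: trivial_limit_at_right_real)
  then have "z + e *\<^sub>R v \<in> poly_set k n c t" by (simp add: poly_set_def)
  then have "\<zeta> \<bullet> (z + e *\<^sub>R v - z) \<le> 0" using zeta z by (auto simp: normal_cone_def)
  then have "e * (\<zeta> \<bullet> v) \<le> 0" by simp
  then show ?thesis using e(2) by (simp add: mult_le_0_iff)
qed

lemma poly_mid:
  assumes "x \<in> poly_set k n c t" "y \<in> poly_set k n c t"
  shows "(1/2) *\<^sub>R (x + y) \<in> poly_set k n c t"
  unfolding poly_set_def
proof (intro CollectI ballI)
  fix i assume i: "i \<in> {1..k}"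
  then have "x \<bullet> n i \<le> c i t" "y \<bullet> n i \<le> c i t" using assms by (auto simp: poly_set_def)
  then show "((1/2) *\<^sub>R (x + y)) \<bullet> n i \<le> c i t" by (simp add: inner_add_left)
qed

lemma mid_active:
  assumes "x \<in> poly_set k n c t" "y \<in> poly_set k n c t" "i \<in> {1..k}"
    "((1/2) *\<^sub>R (x + y)) \<bullet> n i = c i t"
  shows "x \<bullet> n i = c i t \<and> y \<bullet> n i = c i t"
proof -
  have "x \<bullet> n i \<le> c i t" "y \<bullet> n i \<le> c i t" using assms by (auto simp: poly_set_def)
  moreover have "x \<bullet> n i + y \<bullet> n i = 2 * c i t" using assms(4) by (simp add: inner_add_left)
  ultimately show ?thesis by linarith
qed

lemma normal_mid:
  assumes x: "x \<in> K" and y: "y \<in> K" and z: "\<zeta> \<in> normal_cone K x" and o: "\<zeta> \<bullet> (y - x) = 0"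
    and m: "(1/2) *\<^sub>R (x + y) \<in> K"
  shows "\<zeta> \<in> normal_cone K ((1/2) *\<^sub>R (x + y))"
proof -
  have "\<zeta> \<bullet> (c - (1/2) *\<^sub>R (x + y)) \<le> 0" if "c \<in> K" for c
  proof -
    have "\<zeta> \<bullet> (c - x) \<le> 0" using z x that by (auto simp: normal_cone_def)
    moreover have "\<zeta> \<bullet> y = \<zeta> \<bullet> x" using o by (simp add: inner_diff_right)
    ultimately show ?thesis by (simp add: inner_diff_right inner_add_right)
  qed
  then show ?thesis using m by (auto simp: normal_cone_def)
qed

lemma dual_vec:
  fixes B :: "'a::euclidean_space set"
  assumes "independent B"
  shows "\<exists>u. \<forall>b\<in>B. u \<bullet> b = f b"
proof -
  obtain g where g: "linear g" "\<forall>x\<in>B. g x = f x" using linear_independent_extend[OF assms] by blast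
  define u where "u = (\<Sum>e\<in>Basis. g e *\<^sub>R e)"
  have "u \<bullet> b = g b" for b
  proof -
    have "u \<bullet> b = (\<Sum>e\<in>Basis. g e * (e \<bullet> b))" by (simp add: u_def inner_sum_left)
    also have "\<dots> = (\<Sum>e\<in>Basis. (b \<bullet> e) * g e)" by (simp add: inner_commute mult.commute)
    also have "\<dots> = g (\<Sum>e\<in>Basis. (b \<bullet> e) *\<^sub>R e)" using g(1) by (simp add: linear_sum linear_scale)
    also have "\<dots> = g b" by (simp add: euclidean_representation)
    finally show ?thesis .
  qed
  then show ?thesis using g(2) by metis
qed


lemma lvl_deriv:
  fixes h :: "real \<Rightarrow> real"
  assumes d: "(h has_real_derivative D) (at t)" and l: "t islimpt A" and c: "\<forall>s\<in>A. h s = h t"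
  shows "D = 0"
proof -
  have "((\<lambda>y. (h y - h t) / (y - t)) \<longlongrightarrow> D) (at t within A)"
    using has_field_derivative_at_within[OF d, of A] unfolding has_field_derivative_iff .
  moreover have "\<forall>\<^sub>F y in at t within A. (h y - h t) / (y - t) = 0"
    using c by (auto simp: eventually_at_filter)
  ultimately have "((\<lambda>y. 0) \<longlongrightarrow> D) (at t within A)"
    by (rule Lim_transform_eventually)
  moreover have "at t within A \<noteq> bot" using l by (simp add: trivial_limit_within)
  ultimately show ?thesis using tendsto_unique tendsto_const by blast
qed

lemma pos_islimpt: "(t::real) > 0 \<Longrightarrow> t islimpt {0<..}"
  unfolding islimpt_approachable
proof (intro allI impI)
  fix e :: real assume "t > 0" "e > 0"
  then show "\<exists>x'\<in>{0<..}. x' \<noteq> t \<and> dist x' t < e"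
    by (intro bexI[of _ "t + e/2"]) (auto simp: dist_real_def)
qed

theorem theorem6:
  fixes n :: "nat \<Rightarrow> 'a::euclidean_space"
    and c :: "nat \<Rightarrow> real \<Rightarrow> real"
    and k :: nat and T :: real
  assumes T_pos: "T > 0"
    and k_ge: "k \<ge> DIM('a)"
    and c_lip: "\<forall>i\<in>{1..k}. \<exists>L. L-lipschitz_on {0..} (c i)"
    and c_per: "\<forall>i\<in>{1..k}. \<forall>t\<ge>0. c i (t + T) = c i t"
    and nonempty: "\<forall>t\<ge>0. poly_set k n c t \<noteq> {}"
    and bounded: "\<exists>R. \<forall>t\<ge>0. poly_set k n c t \<subseteq> cball 0 R"
    and indep: "\<forall>I\<subseteq>{1..k}. card I = DIM('a) \<longrightarrow> inj_on n I \<and> independent (n ` I)"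
    and active: "\<forall>t\<in>{0..T}. \<forall>x\<in>poly_set k n c t. card (active_set k n c t x) \<le> DIM('a)"
    and x_sol: "periodic_solution T (poly_set k n c) x"
    and y_sol: "periodic_solution T (poly_set k n c) y"
    and x_nc: "\<exists>s\<ge>0. \<exists>t\<ge>0. x s \<noteq> x t"
    and y_nc: "\<exists>s\<ge>0. \<exists>t\<ge>0. y s \<noteq> y t"
  shows "\<forall>t\<ge>0. x t = y t"
proof (rule ccontr)
  assume "\<not> (\<forall>t\<ge>0. x t = y t)"
  then obtain t0 where t0: "t0 \<ge> 0" "x t0 \<noteq> y t0" by blast
  define C where "C = poly_set k n c"
  have CT: "C (t + T) = C t" if "t \<ge> 0" for t
    using c_per that unfolding C_def poly_set_def by auto
  have xs: "sweeping_solution C x" and ys: "sweeping_solution C y"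
    using x_sol y_sol unfolding periodic_solution_def C_def by auto
  have xper: "x (t + real m * T) = x t" if "t \<ge> 0" for t m
    using periodic_shift_n[of T C x t m] x_sol T_pos CT that by (simp add: C_def)
  have yper: "y (t + real m * T) = y t" if "t \<ge> 0" for t m
    using periodic_shift_n[of T C y t m] y_sol T_pos CT that by (simp add: C_def)
  define \<delta> where "\<delta> = norm (x t0 - y t0)"
  have dist_const: "norm (x s - y s) = \<delta>" if "s \<ge> 0" for s
    unfolding \<delta>_def
    by (rule antimono_periodic_const[where h = "\<lambda>s. norm (x s - y s)" and T = T])
       (use contract[OF xs ys] xper yper T_pos that t0 in auto)
  have \<delta>0: "\<delta> > 0" using t0 by (simp add: \<delta>_def)
  obtain Nx where Nx: "negligible Nx" "\<forall>t\<ge>0. t \<notin> Nx \<longrightarrow>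
           (\<exists>v. (x has_vector_derivative v) (at t) \<and> - v \<in> normal_cone (C t) (x t))"
    using sol_ae[OF xs] by blast
  obtain Ny where Ny: "negligible Ny" "\<forall>t\<ge>0. t \<notin> Ny \<longrightarrow>
           (\<exists>v. (y has_vector_derivative v) (at t) \<and> - v \<in> normal_cone (C t) (y t))"
    using sol_ae[OF ys] by blast
  obtain Lx where Lx: "Lx \<ge> 0" "\<forall>s\<ge>0. \<forall>t\<ge>0. norm (x s - x t) \<le> Lx * \<bar>s - t\<bar>"
    using sol_lip[OF xs] by blast
  obtain Ly where Ly: "Ly \<ge> 0" "\<forall>s\<ge>0. \<forall>t\<ge>0. norm (y s - y t) \<le> Ly * \<bar>s - t\<bar>"
    using sol_lip[OF ys] by blast
  define G where "G = {t. t > 0 \<and> t \<notin> Nx \<and> t \<notin> Ny}"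
  have "\<forall>t\<in>G. \<exists>v. (x has_vector_derivative v) (at t) \<and> - v \<in> normal_cone (C t) (x t)"
    using Nx(2) by (auto simp: G_def)
  then obtain vx where vx: "\<And>t. t \<in> G \<Longrightarrow> (x has_vector_derivative vx t) (at t) \<and> - vx t \<in> normal_cone (C t) (x t)"
    using bchoice by metis
  have "\<forall>t\<in>G. \<exists>v. (y has_vector_derivative v) (at t) \<and> - v \<in> normal_cone (C t) (y t)"
    using Ny(2) by (auto simp: G_def)
  then obtain vy where vy: "\<And>t. t \<in> G \<Longrightarrow> (y has_vector_derivative vy t) (at t) \<and> - vy t \<in> normal_cone (C t) (y t)"
    using bchoice by metis
  have inC: "x t \<in> C t" "y t \<in> C t" if "t \<ge> 0" for t
    using sol_in[OF xs that] sol_in[OF ys that] by auto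
  have factA: "vx t \<bullet> (y t - x t) = 0 \<and> vy t \<bullet> (x t - y t) = 0" if t: "t \<in> G" for t
  proof -
    have t0': "t > 0" using t by (simp add: G_def)
    have dd: "((\<lambda>s. x s - y s) has_vector_derivative (vx t - vy t)) (at t)"
      using vx[OF t] vy[OF t] by (intro derivative_intros) auto
    have D: "((\<lambda>s. (x s - y s) \<bullet> (x s - y s)) has_real_derivative
        ((x t - y t) \<bullet> (vx t - vy t) + (vx t - vy t) \<bullet> (x t - y t))) (at t)"
      by (rule hvd_inner[OF dd dd])
    have "\<forall>s\<in>{0<..}. (x s - y s) \<bullet> (x s - y s) = (x t - y t) \<bullet> (x t - y t)"
      using dist_const t0' by (simp add: power2_norm_eq_inner[symmetric])
    then have D0: "(x t - y t) \<bullet> (vx t - vy t) + (vx t - vy t) \<bullet> (x t - y t) = 0"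
      using lvl_deriv[OF D pos_islimpt[OF t0']] by blast
    have "- vx t \<bullet> (y t - x t) \<le> 0" using vx[OF t] inC[of t] t0'
      by (auto simp: normal_cone_def split: if_splits)
    moreover have "- vy t \<bullet> (x t - y t) \<le> 0" using vy[OF t] inC[of t] t0'
      by (auto simp: normal_cone_def split: if_splits)
    moreover have "vx t \<bullet> (y t - x t) + vy t \<bullet> (x t - y t) = 0"
      using D0 by (simp add: inner_commute inner_diff_left inner_diff_right algebra_simps)
    ultimately show ?thesis by simp
  qed
  define S where "S t = {i\<in>{1..k}. x t \<bullet> n i = c i t \<and> y t \<bullet> n i = c i t}" for t
  have pol: "vx t \<bullet> v \<ge> 0 \<and> vy t \<bullet> v \<ge> 0" if t: "t \<in> G" and v: "\<And>i. i \<in> S t \<Longrightarrow> v \<bullet> n i \<le> 0" for t v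
  proof -
    have t0': "t \<ge> 0" using t by (simp add: G_def)
    define m where "m = (1/2) *\<^sub>R (x t + y t)"
    have mC: "m \<in> C t" unfolding m_def C_def by (rule poly_mid) (use inC[OF t0'] in \<open>auto simp: C_def\<close>)
    have act: "v \<bullet> n i \<le> 0" if "i \<in> {1..k}" "m \<bullet> n i = c i t" for i
      using mid_active[of "x t" k n c t "y t" i] inC[OF t0'] that v by (auto simp: m_def C_def S_def)
    have nx: "- vx t \<in> normal_cone (C t) m"
      unfolding m_def by (rule normal_mid) (use inC[OF t0'] vx[OF t] factA[OF t] mC in \<open>auto simp: m_def\<close>)
    have "- vy t \<in> normal_cone (C t) ((1/2) *\<^sub>R (y t + x t))"
      by (rule normal_mid) (use inC[OF t0'] vy[OF t] factA[OF t] mC in \<open>auto simp: m_def add.commute\<close>)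
    then have ny: "- vy t \<in> normal_cone (C t) m" by (simp add: m_def add.commute)
    have "- vx t \<bullet> v \<le> 0"
      by (rule poly_polar[of m k n c t]) (use mC nx act in \<open>auto simp: C_def\<close>)
    moreover have "- vy t \<bullet> v \<le> 0"
      by (rule poly_polar[of m k n c t]) (use mC ny act in \<open>auto simp: C_def\<close>)
    ultimately show ?thesis by simp
  qed
  have pol0: "vx t \<bullet> v = 0 \<and> vy t \<bullet> v = 0" if t: "t \<in> G" and v: "\<And>i. i \<in> S t \<Longrightarrow> v \<bullet> n i = 0" for t v
    using pol[OF t, of v] pol[OF t, of "- v"] v by fastforce
  define A where "A J = {s\<in>G. S s = J}" for J
  define E where "E = (\<Union>J\<in>Pow {1..k}. {s\<in>A J. \<not> s islimpt A J})"
  have Eneg: "negligible E"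
    unfolding E_def by (intro countable_negligible countable_UN[OF _ countable_isolated] countable_finite) auto
  have vxy: "vx t = vy t" if t: "t \<in> G" "t \<notin> E" for t
  proof -
    have tA: "t \<in> A (S t)" using t by (simp add: A_def)
    have "S t \<in> Pow {1..k}" by (auto simp: S_def)
    then have lim: "t islimpt A (S t)" using t tA by (auto simp: E_def)
    have dd: "((\<lambda>s. x s - y s) has_vector_derivative (vx t - vy t)) (at t)"
      using vx[OF t(1)] vy[OF t(1)] by (intro derivative_intros) auto
    have o: "(vx t - vy t) \<bullet> n i = 0" if i: "i \<in> S t" for i
    proof -
      have D: "((\<lambda>s. (x s - y s) \<bullet> n i) has_real_derivative ((x t - y t) \<bullet> 0 + (vx t - vy t) \<bullet> n i)) (at t)"
        by (rule hvd_inner[OF dd, of "\<lambda>_. n i"]) simp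
      have "\<forall>s\<in>A (S t). (x s - y s) \<bullet> n i = (x t - y t) \<bullet> n i"
      proof
        fix s assume "s \<in> A (S t)"
        then have "i \<in> S s" using i by (simp add: A_def)
        then show "(x s - y s) \<bullet> n i = (x t - y t) \<bullet> n i" using i by (simp add: S_def inner_diff_left)
      qed
      from lvl_deriv[OF D lim this] show ?thesis by simp
    qed
    have "vx t \<bullet> (vx t - vy t) = 0 \<and> vy t \<bullet> (vx t - vy t) = 0"
      using pol0[OF t(1), of "vx t - vy t"] o by (simp add: inner_commute)
    then have "(vx t - vy t) \<bullet> (vx t - vy t) = 0" by (simp add: inner_diff_left)
    then show ?thesis by simp
  qed
  define w0 where "w0 = x 0 - y 0"
  have wconst: "x t - y t = w0" if t: "t \<ge> 0" for t
  proof -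
    have "(\<lambda>s. x s - y s) t = (\<lambda>s. x s - y s) 0"
    proof (rule vconst_ae[OF t _ negligible_Un[OF negligible_Un[OF Nx(1) Ny(1)] Eneg]])
      show "norm ((x s - y s) - (x r - y r)) \<le> (Lx + Ly) * \<bar>s - r\<bar>" if "s \<in> {0..t}" "r \<in> {0..t}" for s r
      proof -
        have "norm ((x s - y s) - (x r - y r)) \<le> norm (x s - x r) + norm (y s - y r)"
          using norm_triangle_ineq4[of "x s - x r" "y s - y r"] by (simp add: algebra_simps)
        also have "\<dots> \<le> (Lx + Ly) * \<bar>s - r\<bar>" using Lx Ly that by (simp add: algebra_simps add_mono)
        finally show ?thesis .
      qed
      show "((\<lambda>s. x s - y s) has_vector_derivative 0) (at s)" if "s \<in> {0<..<t}" "s \<notin> Nx \<union> Ny \<union> E" for s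
      proof -
        have sG: "s \<in> G" using that by (auto simp: G_def)
        have "((\<lambda>s. x s - y s) has_vector_derivative (vx s - vy s)) (at s)"
          using vx[OF sG] vy[OF sG] by (intro derivative_intros) auto
        then show ?thesis using vxy[OF sG] that by simp
      qed
    qed
    then show ?thesis by (simp add: w0_def)
  qed
  have w0nz: "w0 \<noteq> 0" using dist_const[of 0] \<delta>0 by (auto simp: w0_def)
  define I where "I = {i\<in>{1..k}. n i \<bullet> w0 = 0}"
  have SI: "S t \<subseteq> I" if "t \<ge> 0" for t
  proof
    fix i assume "i \<in> S t"
    then have "i \<in> {1..k}" "(x t - y t) \<bullet> n i = 0" by (auto simp: S_def inner_diff_left)
    then show "i \<in> I" using wconst[OF that] by (simp add: I_def inner_commute)
  qed
  have finI: "finite I" by (simp add: I_def)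
  have indI: "inj_on n I \<and> independent (n ` I)"
  proof (cases "card I \<ge> DIM('a)")
    case True
    then obtain I' where I': "I' \<subseteq> I" "card I' = DIM('a)" "finite I'"
      by (metis obtain_subset_with_card_n)
    then have "I' \<subseteq> {1..k}" by (auto simp: I_def)
    then have ii: "inj_on n I'" "independent (n ` I')" using indep I' by auto
    have "card (n ` I') = DIM('a)" using ii I' by (simp add: card_image)
    then have "UNIV \<subseteq> span (n ` I')"
      using card_ge_dim_independent[of "n ` I'" UNIV] ii by (simp add: dim_UNIV)
    then have "w0 \<in> span (n ` I')" by blast
    moreover have "orthogonal w0 b" if "b \<in> n ` I'" for b
      using that I' by (auto simp: I_def orthogonal_def inner_commute)
    ultimately have "orthogonal w0 w0" by (rule orthogonal_to_span)
    then show ?thesis using w0nz by (simp add: orthogonal_def)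
  next
    case False
    have "card ({1..k} - I) = k - card I" 
    proof -
      have "I \<subseteq> {1..k}" by (auto simp: I_def)
      then show ?thesis using finI card_Diff_subset[of I "{1..k}"] by simp
    qed
    then have "DIM('a) - card I \<le> card ({1..k} - I)" using k_ge by simp
    then obtain J where J: "J \<subseteq> {1..k} - I" "card J = DIM('a) - card I" "finite J"
      by (metis obtain_subset_with_card_n)
    have "card (I \<union> J) = card I + card J" using J finI by (intro card_Un_disjoint) auto
    then have cIJ: "card (I \<union> J) = DIM('a)" using J False by simp
    have "I \<union> J \<subseteq> {1..k}" using J by (auto simp: I_def)
    then have "inj_on n (I \<union> J) \<and> independent (n ` (I \<union> J))" using indep cIJ by blast
    then show ?thesis by (meson Un_upper1 image_mono independent_mono inj_on_subset)
  qed
  have "\<forall>j\<in>I. \<exists>d. \<forall>b\<in>n ` I. d \<bullet> b = (if b = n j then 1 else 0)"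
  proof
    fix j assume "j \<in> I"
    show "\<exists>d. \<forall>b\<in>n ` I. d \<bullet> b = (if b = n j then 1 else 0)"
      using dual_vec[of "n ` I" "\<lambda>b. if b = n j then 1 else 0"] indI by blast
  qed
  then obtain d where d0: "\<And>j. j \<in> I \<Longrightarrow> \<forall>b\<in>n ` I. d j \<bullet> b = (if b = n j then 1 else 0)"
    by metis
  have d: "d j \<bullet> n i = (if i = j then 1 else 0)" if "i \<in> I" "j \<in> I" for i j
    using d0[OF that(2)] that indI by (auto simp: inj_on_def)
  have factF: "vx t \<bullet> u = 0" if u: "\<And>i. i \<in> I \<Longrightarrow> u \<bullet> n i \<le> 0" and t: "t \<in> G" for u t
  proof -
    have nonneg: "vx s \<bullet> u \<ge> 0" if s: "s \<in> G" for s
    proof -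
      have "s \<ge> 0" using s by (simp add: G_def)
      then show ?thesis using pol[OF s, of u] SI u by blast
    qed
    define h where "h s = - (x s \<bullet> u)" for s
    have hder: "(h has_real_derivative - (vx s \<bullet> u)) (at s)" if s: "s \<in> G" for s
    proof -
      have "((\<lambda>s. x s \<bullet> u) has_real_derivative (x s \<bullet> 0 + vx s \<bullet> u)) (at s)"
        by (rule hvd_inner[of x "vx s" s "\<lambda>_. u" 0]) (use vx[OF s] in auto)
      then show ?thesis unfolding h_def by (auto intro: DERIV_minus)
    qed
    have anti: "h b \<le> h a" if ab: "0 \<le> a" "a \<le> b" for a b
    proof (rule mono_ae[OF ab(2) _ negligible_Un[OF Nx(1) Ny(1)]])
      show "\<bar>h s - h r\<bar> \<le> (Lx * norm u) * \<bar>s - r\<bar>" if "s \<in> {a..b}" "r \<in> {a..b}" for s r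
      proof -
        have "\<bar>h s - h r\<bar> = \<bar>(x s - x r) \<bullet> u\<bar>" by (simp add: h_def inner_diff_left)
        also have "\<dots> \<le> norm (x s - x r) * norm u" by (rule Cauchy_Schwarz_ineq2)
        also have "\<dots> \<le> (Lx * \<bar>s - r\<bar>) * norm u"
          by (rule mult_right_mono) (use Lx that ab in auto)
        finally show ?thesis by (simp add: algebra_simps)
      qed
      show "\<exists>D. (h has_real_derivative D) (at s) \<and> D \<le> 0" if "s \<in> {a<..<b}" "s \<notin> Nx \<union> Ny" for s
      proof -
        have sG: "s \<in> G" using that ab by (auto simp: G_def)
        show ?thesis using hder[OF sG] nonneg[OF sG] by auto
      qed
    qed
    have hc: "h s = h r" if "s \<ge> 0" "r \<ge> 0" for s r
      by (rule antimono_periodic_const[where h = h and T = T])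
         (use anti xper T_pos that in \<open>auto simp: h_def\<close>)
    have t0': "t > 0" using t by (simp add: G_def)
    have "\<forall>s\<in>{0<..}. h s = h t" using hc t0' by auto
    from lvl_deriv[OF hder[OF t] pos_islimpt[OF t0'] this] show ?thesis by simp
  qed
  define u0 where "u0 = - (\<Sum>j\<in>I. d j)"
  have u0n: "u0 \<bullet> n i = -1" if i: "i \<in> I" for i
  proof -
    have "(\<Sum>j\<in>I. d j \<bullet> n i) = (\<Sum>j\<in>I. if i = j then 1 else 0)"
      using d i by (intro sum.cong) auto
    also have "\<dots> = 1" using i finI by simp
    finally show ?thesis by (simp add: u0_def inner_sum_left)
  qed
  have vxd: "vx t \<bullet> d j = 0" if t: "t \<in> G" and j: "j \<in> I" for t j
  proof -
    have "vx t \<bullet> u0 = 0" by (rule factF[OF _ t]) (simp add: u0n)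
    moreover have "vx t \<bullet> (u0 - d j) = 0"
      by (rule factF[OF _ t]) (use u0n d j in \<open>auto simp: inner_diff_left\<close>)
    ultimately show ?thesis by (simp add: inner_diff_right)
  qed
  have vx0: "vx t = 0" if t: "t \<in> G" for t
  proof -
    define v where "v = vx t - (\<Sum>j\<in>I. (n j \<bullet> vx t) *\<^sub>R d j)"
    have vn: "v \<bullet> n i = 0" if i: "i \<in> I" for i
    proof -
      have "(\<Sum>j\<in>I. (n j \<bullet> vx t) * (d j \<bullet> n i)) = (\<Sum>j\<in>I. if j = i then n j \<bullet> vx t else 0)"
        using d i by (intro sum.cong) auto
      also have "\<dots> = n i \<bullet> vx t" using i finI by simp
      finally have "(\<Sum>j\<in>I. (n j \<bullet> vx t) * (d j \<bullet> n i)) = n i \<bullet> vx t" .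
      moreover have "v \<bullet> n i = vx t \<bullet> n i - (\<Sum>j\<in>I. (n j \<bullet> vx t) * (d j \<bullet> n i))"
        by (simp add: v_def inner_diff_left inner_sum_left)
      ultimately show ?thesis by (simp add: inner_commute)
    qed
    have t0': "t \<ge> 0" using t by (simp add: G_def)
    have "vx t \<bullet> v = 0" using pol0[OF t, of v] vn SI[OF t0'] by blast
    moreover have "vx t \<bullet> v = vx t \<bullet> vx t"
      using vxd[OF t] by (simp add: v_def inner_diff_right inner_sum_right)
    ultimately show ?thesis by simp
  qed
  have xconst: "x t = x 0" if t: "t \<ge> 0" for t
  proof (rule vconst_ae[OF t _ negligible_Un[OF Nx(1) Ny(1)]])
    show "norm (x s - x r) \<le> Lx * \<bar>s - r\<bar>" if "s \<in> {0..t}" "r \<in> {0..t}" for s r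
      using Lx that by auto
    show "(x has_vector_derivative 0) (at s)" if "s \<in> {0<..<t}" "s \<notin> Nx \<union> Ny" for s
    proof -
      have sG: "s \<in> G" using that by (auto simp: G_def)
      show ?thesis using vx[OF sG] vx0[OF sG] by simp
    qed
  qed
  then show False using x_nc by metis
qed
end
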